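(* Let $h\in\mathbb{R}[x_1,\ldots,x_n]$ be hyperbolic of degree $d$ with respect to $\mathbf{e}$, let $k$ be a positive integer, let $\mathbf{v}\in\mathbb{R}^n$, and let $$g_{\mathbf{v}}(t):=(1-D_{\mathbf{v}})^k(1-D_{\mathbf{e}}+kD_{\mathbf{v}})h(t\mathbf{e}).$$ Then $g_{\mathbf{v}}(t)=T_{k,d}\big(h(t\mathbf{e}-\mathbf{v})\big)$, where $T_{k,d}:\mathbb{R}[t]\to\mathbb{R}[t]$ is the linear operator $$T_{k,d}\Big(\sum_{j\geq0}a_jt^j\Big)=-\sum_{j=0}^d\Big(\frac{j+1}{k+1}a_{j+1}+(d-1-j)a_j\Big)(d-j)!\binom{k+1}{d-j}t^j.$$ Moreover, if $f$ is a $[0,1/k]$-rooted polynomial of degree $d$, then $T_{k,d}(f)$ is real-rooted.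
   Context: A homogeneous polynomial $h$ of degree $d$ is hyperbolic with respect to $\mathbf{e}\in\mathbb{R}^n$ if $h(\mathbf{e})\neq0$ and for every $\mathbf{x}$, $t\mapsto h(t\mathbf{e}-\mathbf{x})$ has only real zeros. $D_{\mathbf{v}}=\sum_kv_k\partial/\partial x_k$ is the directional derivative; in the expression for $g_{\mathbf{v}}$ the operator is applied to $h$ and the result evaluated at $t\mathbf{e}$. For an interval $I\subseteq\mathbb{R}$, a univariate polynomial is $I$-rooted if all its zeros lie in $I$. *)

theory Defs
  imports "HOL-Analysis.Analysis" "HOL-Computational_Algebra.Polynomial"
begin

definition homog_poly_fun :: "nat \<Rightarrow> (real^'n \<Rightarrow> real) \<Rightarrow> bool" where
  "homog_poly_fun d h \<longleftrightarrow>
     (\<exists>S :: ('n \<Rightarrow> nat) set. \<exists>c :: ('n \<Rightarrow> nat) \<Rightarrow> real.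
        finite S \<and> (\<forall>\<alpha>\<in>S. (\<Sum>i\<in>UNIV. \<alpha> i) = d) \<and>
        h = (\<lambda>x. \<Sum>\<alpha>\<in>S. c \<alpha> * (\<Prod>i\<in>UNIV. (x $ i) ^ (\<alpha> i))))"

definition rooted_in :: "real set \<Rightarrow> real poly \<Rightarrow> bool" where
  "rooted_in I p \<longleftrightarrow> (\<forall>z. poly (map_poly complex_of_real p) z = 0 \<longrightarrow> z \<in> complex_of_real ` I)"

definition real_rooted :: "real poly \<Rightarrow> bool" where
  "real_rooted p \<longleftrightarrow> rooted_in UNIV p"

definition hyperbolic :: "nat \<Rightarrow> (real^'n \<Rightarrow> real) \<Rightarrow> real^'n \<Rightarrow> bool" where
  "hyperbolic d h e \<longleftrightarrow> homog_poly_fun d h \<and> h e \<noteq> 0 \<and>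
     (\<forall>x. \<forall>p. (\<forall>t. poly p t = h (t *\<^sub>R e - x)) \<longrightarrow> real_rooted p)"

definition Dv :: "real^'n \<Rightarrow> (real^'n \<Rightarrow> real) \<Rightarrow> (real^'n \<Rightarrow> real)" where
  "Dv v f = (\<lambda>x. deriv (\<lambda>s. f (x + s *\<^sub>R v)) 0)"

definition g_v :: "nat \<Rightarrow> (real^'n \<Rightarrow> real) \<Rightarrow> real^'n \<Rightarrow> real^'n \<Rightarrow> real \<Rightarrow> real" where
  "g_v k h e v t =
     (((\<lambda>f x. f x - Dv v f x) ^^ k)
        (\<lambda>x. h x - Dv e h x + real k * Dv v h x)) (t *\<^sub>R e)"

definition T_op :: "nat \<Rightarrow> nat \<Rightarrow> real poly \<Rightarrow> real poly" where
  "T_op k d p = - (\<Sum>j\<in>{0..d}. monom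
      (((real j + 1) / (real k + 1) * coeff p (j + 1) + (real d - 1 - real j) * coeff p j)
        * fact (d - j) * real ((k + 1) choose (d - j))) j)"

end

theory Submission
  imports Defs "HOL-Computational_Algebra.Fundamental_Theorem_Algebra"
begin


definition ev :: "'a::real_normed_field poly poly \<Rightarrow> 'a \<Rightarrow> 'a \<Rightarrow> 'a" where
  "ev P t s = poly (poly P [:s:]) t"

lemma poly_sum_N:
  fixes x :: "'a::{comm_semiring_0,semiring_1}"
  assumes "degree p \<le> N" shows "poly p x = (\<Sum>i\<le>N. coeff p i * x ^ i)"
proof -
  have "poly p x = (\<Sum>i\<le>degree p. coeff p i * x ^ i)" by (rule poly_altdef)
  also have "\<dots> = (\<Sum>i\<le>N. coeff p i * x ^ i)"
    by (rule sum.mono_neutral_left) (use assms in \<open>auto simp: coeff_eq_0\<close>)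
  finally show ?thesis .
qed

lemma ev_sum:
  assumes "degree P \<le> N" shows "ev P t s = (\<Sum>i\<le>N. poly (coeff P i) t * s ^ i)"
  unfolding ev_def
  by (subst poly_sum_N[OF assms]) (simp add: poly_sum poly_power mult.commute)

lemma ev_add [simp]: "ev (P + Q) t s = ev P t s + ev Q t s"
  by (simp add: ev_def)
lemma ev_diff [simp]: "ev (P - Q) t s = ev P t s - ev Q t s"
  by (simp add: ev_def)
lemma ev_smult [simp]: "ev (smult c P) t s = poly c t * ev P t s"
  by (simp add: ev_def)

lemma ev_DERIV_t:
  "((\<lambda>t. ev P t s) has_field_derivative ev (map_poly pderiv P) t s) (at t)"
proof -
  have dg: "degree (map_poly pderiv P) \<le> degree P" by (rule map_poly_degree_leq)
  have e: "(\<lambda>t. ev P t s) = (\<lambda>t. \<Sum>i\<le>degree P. poly (coeff P i) t * s ^ i)"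
    by (rule ext) (rule ev_sum, simp)
  have "ev (map_poly pderiv P) t s = (\<Sum>i\<le>degree P. poly (pderiv (coeff P i)) t * s ^ i)"
    by (subst ev_sum[OF dg]) (simp add: coeff_map_poly)
  then show ?thesis unfolding e
    by (auto intro!: derivative_eq_intros)
qed

lemma ev_DERIV_s_sum:
  "((\<lambda>s. ev P t s) has_field_derivative
     (\<Sum>i\<le>degree P. poly (coeff P i) t * (of_nat i * s ^ (i - 1)))) (at s)"
proof -
  have e: "(\<lambda>s. ev P t s) = (\<lambda>s. \<Sum>i\<le>degree P. poly (coeff P i) t * s ^ i)"
    by (rule ext) (rule ev_sum, simp)
  show ?thesis unfolding e
    by (auto intro!: derivative_eq_intros sum.cong simp: mult_ac)
qed

lemma ev_pderiv:
  "ev (pderiv P) t s = (\<Sum>i\<le>degree P. poly (coeff P i) t * (of_nat i * s ^ (i - 1)))"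
proof -
  define f where "f i = poly (coeff P i) t * (of_nat i * s ^ (i - 1))" for i
  have "ev (pderiv P) t s = (\<Sum>i\<le>degree P. poly (coeff (pderiv P) i) t * s ^ i)"
    by (rule ev_sum) (simp add: degree_pderiv)
  also have "\<dots> = (\<Sum>i\<le>degree P. f (Suc i))"
    by (simp add: f_def coeff_pderiv poly_mult mult_ac)
  also have "\<dots> = (\<Sum>i\<le>Suc (degree P). f i)"
    by (subst sum.atMost_Suc_shift) (simp add: f_def)
  also have "\<dots> = (\<Sum>i\<le>degree P. f i)"
    by (simp add: f_def coeff_eq_0)
  finally show ?thesis by (simp add: f_def)
qed

lemma ev_DERIV_s:
  "((\<lambda>s. ev P t s) has_field_derivative ev (pderiv P) t s) (at s)"
  using ev_DERIV_s_sum[of P t s] by (simp add: ev_pderiv)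

lemma ev_DERIV_dir:
  "((\<lambda>l. ev P (t + l*u1) (s + l*u2)) has_field_derivative
     (u1 * ev (map_poly pderiv P) (t + l*u1) (s + l*u2) + u2 * ev (pderiv P) (t + l*u1) (s + l*u2))) (at l)"
proof -
  have dg: "degree (map_poly pderiv P) \<le> degree P" by (rule map_poly_degree_leq)
  have e: "(\<lambda>l. ev P (t + l*u1) (s + l*u2)) =
      (\<lambda>l. \<Sum>i\<le>degree P. poly (coeff P i) (t + l*u1) * (s + l*u2) ^ i)"
    by (rule ext) (rule ev_sum, simp)
  have e1: "ev (map_poly pderiv P) a b = (\<Sum>i\<le>degree P. poly (pderiv (coeff P i)) a * b ^ i)" for a b
    by (subst ev_sum[OF dg]) (simp add: coeff_map_poly)
  show ?thesis unfolding e e1 ev_pderiv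
    by (auto intro!: derivative_eq_intros sum.cong simp: sum_distrib_left sum.distrib[symmetric] algebra_simps)
qed

definition linepoly :: "'a::real_normed_field poly poly \<Rightarrow> 'a \<Rightarrow> 'a \<Rightarrow> 'a \<Rightarrow> 'a \<Rightarrow> 'a poly" where
  "linepoly P t s u1 u2 = (\<Sum>i\<le>degree P. pcompose (coeff P i) [:t, u1:] * [:s, u2:] ^ i)"

lemma poly_linepoly: "poly (linepoly P t s u1 u2) l = ev P (t + l*u1) (s + l*u2)"
  unfolding linepoly_def
  by (subst ev_sum[of P "degree P"]) (simp_all add: poly_sum poly_mult poly_power poly_pcompose mult_ac)

lemma logderiv:
  fixes r :: "nat \<Rightarrow> 'a::field"
  assumes "poly (\<Prod>i<n. [:-r i, 1:]) x \<noteq> 0"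
  shows "poly (pderiv (\<Prod>i<n. [:-r i, 1:])) x = poly (\<Prod>i<n. [:-r i, 1:]) x * (\<Sum>i<n. 1 / (x - r i))"
  using assms
proof (induction n)
  case 0 then show ?case by simp
next
  case (Suc n)
  have nz: "x - r n \<noteq> 0" "poly (\<Prod>i<n. [:-r i, 1:]) x \<noteq> 0"
    using Suc.prems by (auto simp: poly_prod)
  define Q where "Q = (\<Prod>i<n. [:-r i, 1:])"
  have d1: "pderiv [:-r n, 1:] = 1" by (simp add: pderiv_pCons)
  have e1: "pderiv (\<Prod>i<Suc n. [:-r i, 1:]) = Q + [:-r n, 1:] * pderiv Q"
    unfolding Q_def by (simp only: prod.lessThan_Suc pderiv_mult d1 mult_1_right)
  have e2: "poly (\<Prod>i<Suc n. [:-r i, 1:]) x = poly Q x * (x - r n)"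
    unfolding Q_def by (simp add: poly_mult algebra_simps)
  have ih: "poly (pderiv Q) x = poly Q x * (\<Sum>i<n. 1 / (x - r i))"
    using Suc.IH[OF nz(2)] unfolding Q_def .
  have "poly (pderiv (\<Prod>i<Suc n. [:-r i, 1:])) x = poly Q x + (x - r n) * poly (pderiv Q) x"
    unfolding e1 by (simp add: poly_mult algebra_simps)
  also have "\<dots> = poly Q x * (x - r n) * ((\<Sum>i<n. 1 / (x - r i)) + 1 / (x - r n))"
    unfolding ih using nz(1) by (simp add: field_simps)
  also have "\<dots> = poly (\<Prod>i<Suc n. [:-r i, 1:]) x * (\<Sum>i<Suc n. 1 / (x - r i))"
    by (simp only: e2 sum.lessThan_Suc)
  finally show ?case .
qed

lemma Im_inv_neg:
  fixes r :: complex assumes "Im r < 0" shows "Im (1 / (0 - r)) < 0"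
proof -
  have "(Re r)^2 + (Im r)^2 > 0" using assms by (simp add: sum_power2_gt_zero_iff)
  moreover have "Im (1 / (0 - r)) = Im r / ((Re r)^2 + (Im r)^2)" by (simp add: Im_divide)
  ultimately show ?thesis using assms by (simp add: divide_neg_pos)
qed

lemma stab:
  fixes P :: "complex poly poly" and u1 u2 :: complex
  assumes mono: "\<And>t s l. Good t s \<Longrightarrow> Im l \<ge> 0 \<Longrightarrow> Good (t + l*u1) (s + l*u2)"
    and nz: "\<And>t s. Good t s \<Longrightarrow> ev P t s \<noteq> 0"
    and g: "Good t s"
  shows "ev P t s - (u1 * ev (map_poly pderiv P) t s + u2 * ev (pderiv P) t s) \<noteq> 0"
proof -
  define q where "q = linepoly P t s u1 u2"
  have pq: "poly q l = ev P (t + l*u1) (s + l*u2)" for l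
    unfolding q_def by (rule poly_linepoly)
  have "((\<lambda>l. poly q l) has_field_derivative
     (u1 * ev (map_poly pderiv P) (t + 0*u1) (s + 0*u2) + u2 * ev (pderiv P) (t + 0*u1) (s + 0*u2))) (at 0)"
    unfolding pq by (rule ev_DERIV_dir)
  then have D: "poly (pderiv q) 0 = u1 * ev (map_poly pderiv P) t s + u2 * ev (pderiv P) t s"
    using DERIV_unique[OF poly_DERIV[of q 0]] by simp
  have q0: "poly q 0 = ev P t s" using pq[of 0] by simp
  have q0nz: "poly q 0 \<noteq> 0" using q0 nz[OF g] by simp
  then have qnz: "q \<noteq> 0" by auto
  obtain root where rt: "smult (lead_coeff q) (\<Prod>i<degree q. [:-root i, 1:]) = q"
    using complex_poly_decompose' by blast
  define R where "R = (\<Prod>i<degree q. [:-root i, 1:])"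
  define S where "S = (\<Sum>i<degree q. 1 / (0 - root i))"
  have lc: "lead_coeff q \<noteq> 0" using qnz by simp
  have qR: "q = smult (lead_coeff q) R" using rt R_def by simp
  have R0: "poly R 0 \<noteq> 0" using q0nz qR by (metis mult_zero_right poly_smult)
  have Im_root: "Im (root i) < 0" if "i < degree q" for i
  proof (rule ccontr)
    assume "\<not> Im (root i) < 0"
    then have "Good (t + root i * u1) (s + root i * u2)" by (intro mono[OF g]) simp
    then have "poly q (root i) \<noteq> 0" using nz pq by simp
    moreover have "poly R (root i) = 0" unfolding R_def poly_prod using that
      by (intro prod_zero) auto
    ultimately show False using qR by (metis mult_zero_right poly_smult)
  qed
  have dq: "poly (pderiv q) 0 = lead_coeff q * poly R 0 * S"
    using logderiv[of root "degree q" 0] R0 unfolding R_def[symmetric] S_def[symmetric]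
    by (subst qR) (simp add: pderiv_smult)
  have "S \<noteq> 1"
  proof (cases "degree q = 0")
    case True then show ?thesis by (simp add: S_def)
  next
    case False
    have "Im S = (\<Sum>i<degree q. Im (1 / (0 - root i)))" by (simp add: S_def Im_sum)
    also have "\<dots> < 0"
    proof -
      have "0 < (\<Sum>i<degree q. - Im (1 / (0 - root i)))"
        using False by (intro sum_pos) (auto intro: Im_inv_neg Im_root simp del: diff_0)
      then show ?thesis by (simp add: sum_negf)
    qed
    finally show ?thesis by auto
  qed
  have "poly q 0 - poly (pderiv q) 0 = lead_coeff q * poly R 0 * (1 - S)"
    using dq poly_smult[of "lead_coeff q" R 0] qR by (simp add: algebra_simps)
  moreover have "lead_coeff q * poly R 0 * (1 - S) \<noteq> 0" using lc R0 \<open>S \<noteq> 1\<close> by simp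
  ultimately show ?thesis using q0 D by simp
qed



lemma coeff_iter:
  fixes G :: "'c::{idom,ring_char_0} poly"
  shows "coeff (((\<lambda>Q. Q - pderiv Q) ^^ k) G) 0 =
         (\<Sum>m\<le>k. (-1)^m * of_nat (k choose m) * fact m * coeff G m)"
proof (induction k arbitrary: G)
  case 0 then show ?case by simp
next
  case (Suc k)
  define g where "g m = coeff G m" for m
  have "coeff (((\<lambda>Q. Q - pderiv Q) ^^ Suc k) G) 0 =
        coeff (((\<lambda>Q. Q - pderiv Q) ^^ k) (G - pderiv G)) 0"
    by (simp only: funpow_Suc_right o_def)
  also have "\<dots> = (\<Sum>m\<le>k. (-1)^m * of_nat (k choose m) * fact m * (g m - of_nat (Suc m) * g (Suc m)))"
    by (simp add: Suc.IH coeff_pderiv g_def)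
  also have "\<dots> = (\<Sum>m\<le>k. (-1)^m * of_nat (k choose m) * fact m * g m)
      - (\<Sum>m\<le>k. (-1)^m * of_nat (k choose m) * fact (Suc m) * g (Suc m))"
    by (simp add: sum_subtractf algebra_simps)
  also have "(\<Sum>m\<le>k. (-1)^m * of_nat (k choose m) * fact m * g m)
      = (\<Sum>m\<le>Suc k. (-1)^m * of_nat (k choose m) * fact m * g m)"
    by simp
  also have "\<dots> = g 0 + (\<Sum>m\<le>k. (-1)^(Suc m) * of_nat (k choose Suc m) * fact (Suc m) * g (Suc m))"
    by (subst sum.atMost_Suc_shift) simp
  also have "g 0 + (\<Sum>m\<le>k. (-1)^(Suc m) * of_nat (k choose Suc m) * fact (Suc m) * g (Suc m))
      - (\<Sum>m\<le>k. (-1)^m * of_nat (k choose m) * fact (Suc m) * g (Suc m))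
      = g 0 + (\<Sum>m\<le>k. (-1)^(Suc m) * of_nat (Suc k choose Suc m) * fact (Suc m) * g (Suc m))"
    by (simp add: sum_subtractf[symmetric] algebra_simps sum.distrib[symmetric])
  also have "\<dots> = (\<Sum>m\<le>Suc k. (-1)^m * of_nat (Suc k choose m) * fact m * g m)"
    unfolding sum.atMost_Suc_shift[of _ k] by simp
  finally show ?case by (simp add: g_def)
qed

lemma const_poly_eq:
  "((-1)^m * of_nat n * fact m :: 'a::{idom,ring_char_0} poly) = [:(-1)^m * of_nat n * fact m:]"
proof -
  have a: "((-1)^m :: 'a poly) = [:(-1)^m:]" by (induction m) (simp_all add: )
  have b: "(fact m :: 'a poly) = [:fact m:]" by (metis of_nat_fact of_nat_poly)
  show ?thesis by (simp add: a b of_nat_poly)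
qed

lemma coeff_iter2:
  fixes G :: "'a::{field,ring_char_0} poly poly"
  shows "coeff (coeff (((\<lambda>Q. Q - pderiv Q) ^^ k) G) 0) j =
         (\<Sum>m\<le>k. (-1)^m * of_nat (k choose m) * fact m * coeff (coeff G m) j)"
  by (simp add: coeff_iter coeff_sum const_poly_eq)

definition Pc :: "nat \<Rightarrow> (nat \<Rightarrow> 'a) \<Rightarrow> 'a::real_normed_field poly poly" where
  "Pc d c = (\<Sum>j\<le>d. monom (monom (c j * (-1)^(d-j)) j) (d-j))"

lemma coeff_Pc:
  "coeff (coeff (Pc d c) m) j = (if j \<le> d \<and> m = d - j then c j * (-1)^m else 0)"
proof -
  have "coeff (coeff (Pc d c) m) j =
      (\<Sum>i\<le>d. if i = j then (if m = d - j then c j * (-1)^(d-j) else 0) else 0)"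
    unfolding Pc_def coeff_sum by (intro sum.cong) auto
  also have "\<dots> = (if j \<le> d \<and> m = d - j then c j * (-1)^m else 0)"
    by (subst sum.delta) auto
  finally show ?thesis .
qed

definition G1 :: "nat \<Rightarrow> 'a::real_normed_field poly poly \<Rightarrow> 'a poly poly" where
  "G1 k P = P - (map_poly pderiv P - smult [:of_nat k:] (pderiv P))"

lemma coeff_G1:
  "coeff (coeff (G1 k P) m) j = coeff (coeff P m) j - of_nat (Suc j) * coeff (coeff P m) (Suc j)
     + of_nat k * (of_nat (Suc m) * coeff (coeff P (Suc m)) j)"
  by (simp add: G1_def coeff_map_poly coeff_pderiv of_nat_poly)

lemma sum_delta_choose:
  fixes F :: "nat \<Rightarrow> 'a::{comm_ring_1}"
  shows "(\<Sum>m\<le>k. if m = r then of_nat (k choose m) * F m else 0) = of_nat (k choose r) * F r"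
  by (subst sum.delta) (auto simp: binomial_eq_0)

lemma neg1_sq: "((-1::'a::comm_ring_1)^m) * (-1)^m = 1"
  by (simp flip: power_add add: power_add[symmetric] mult_2[symmetric] power_mult)

lemma coeff_Gk:
  fixes c :: "nat \<Rightarrow> 'a::real_normed_field"
  shows "coeff (coeff (((\<lambda>Q. Q - pderiv Q) ^^ k) (G1 k (Pc d c))) 0) j =
    (if j \<le> d then of_nat (k choose (d-j)) * fact (d-j) * c j else 0)
    - (if j < d then of_nat (k choose (d-j-1)) * fact (d-j-1) *
          (of_nat (Suc j) * c (Suc j) + of_nat k * of_nat (d-j) * c j) else 0)"
proof -
  define w :: "nat \<Rightarrow> 'a" where "w m = (-1)^m * of_nat (k choose m) * fact m" for m
  have "coeff (coeff (((\<lambda>Q. Q - pderiv Q) ^^ k) (G1 k (Pc d c))) 0) j =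
     (\<Sum>m\<le>k. w m * (if j \<le> d \<and> m = d - j then c j * (-1)^m else 0))
     - (\<Sum>m\<le>k. w m * (of_nat (Suc j) * (if Suc j \<le> d \<and> m = d - Suc j then c (Suc j) * (-1)^m else 0)))
     + (\<Sum>m\<le>k. w m * (of_nat k * (of_nat (Suc m) * (if j \<le> d \<and> Suc m = d - j then c j * (-1)^(Suc m) else 0))))"
    unfolding coeff_iter2 coeff_G1 coeff_Pc w_def
    by (simp add: sum_subtractf sum.distrib algebra_simps)
  also have "(\<Sum>m\<le>k. w m * (if j \<le> d \<and> m = d - j then c j * (-1)^m else 0))
      = (if j \<le> d then of_nat (k choose (d-j)) * fact (d-j) * c j else 0)"
  proof (cases "j \<le> d")
    case True
    have "(\<Sum>m\<le>k. w m * (if j \<le> d \<and> m = d - j then c j * (-1)^m else 0))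
       = (\<Sum>m\<le>k. if m = d - j then of_nat (k choose m) * (fact m * c j * ((-1)^m * (-1)^m)) else 0)"
      using True by (intro sum.cong) (auto simp: w_def mult_ac)
    also have "\<dots> = of_nat (k choose (d-j)) * fact (d-j) * c j"
      by (subst sum_delta_choose) (simp add: neg1_sq mult_ac)
    finally show ?thesis using True by simp
  qed simp
  also have "(\<Sum>m\<le>k. w m * (of_nat (Suc j) * (if Suc j \<le> d \<and> m = d - Suc j then c (Suc j) * (-1)^m else 0)))
      = (if j < d then of_nat (k choose (d-j-1)) * fact (d-j-1) * (of_nat (Suc j) * c (Suc j)) else 0)"
  proof (cases "j < d")
    case True
    have "(\<Sum>m\<le>k. w m * (of_nat (Suc j) * (if Suc j \<le> d \<and> m = d - Suc j then c (Suc j) * (-1)^m else 0)))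
       = (\<Sum>m\<le>k. if m = d - j - 1 then of_nat (k choose m) * (fact m * (of_nat (Suc j) * c (Suc j)) * ((-1)^m * (-1)^m)) else 0)"
      using True by (intro sum.cong) (auto simp: w_def mult_ac)
    also have "\<dots> = of_nat (k choose (d-j-1)) * fact (d-j-1) * (of_nat (Suc j) * c (Suc j))"
      by (subst sum_delta_choose) (simp add: neg1_sq mult_ac)
    finally show ?thesis using True by simp
  qed simp
  also have "(\<Sum>m\<le>k. w m * (of_nat k * (of_nat (Suc m) * (if j \<le> d \<and> Suc m = d - j then c j * (-1)^(Suc m) else 0))))
      = - (if j < d then of_nat (k choose (d-j-1)) * fact (d-j-1) * (of_nat k * of_nat (d-j) * c j) else 0)"
  proof (cases "j < d")
    case True
    have "(\<Sum>m\<le>k. w m * (of_nat k * (of_nat (Suc m) * (if j \<le> d \<and> Suc m = d - j then c j * (-1)^(Suc m) else 0))))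
       = (\<Sum>m\<le>k. if m = d - j - 1 then of_nat (k choose m) * (- (fact m * (of_nat k * of_nat (d-j) * c j)) * ((-1)^m * (-1)^m)) else 0)"
      using True by (intro sum.cong) (auto simp: w_def mult_ac)
    also have "\<dots> = - (of_nat (k choose (d-j-1)) * fact (d-j-1) * (of_nat k * of_nat (d-j) * c j))"
      by (subst sum_delta_choose) (simp add: neg1_sq mult_ac)
    finally show ?thesis using True by simp
  qed auto
  finally show ?thesis by (cases "j < d") (simp_all add: distrib_left)
qed

lemma coeff_T_op:
  "coeff (T_op k d p) j = (if j \<le> d then
     - (((real j + 1) / (real k + 1) * coeff p (j + 1) + (real d - 1 - real j) * coeff p j)
        * fact (d - j) * real ((k + 1) choose (d - j))) else 0)"
  unfolding T_op_def coeff_minus coeff_sum coeff_monom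
  by (subst sum.delta) auto

lemma I1: "real ((k+1) choose Suc r) * fact (Suc r) = (real k + 1) * real (k choose r) * fact r"
proof -
  have "Suc r * ((k+1) choose Suc r) = (k+1) * (k choose r)"
    using binomial_absorption[of r "k+1"] by simp
  then have H: "real (Suc r) * real ((k+1) choose Suc r) = (real k + 1) * real (k choose r)"
    by (metis of_nat_Suc of_nat_mult Suc_eq_plus1 add.commute)
  have "real ((k+1) choose Suc r) * fact (Suc r) = (real (Suc r) * real ((k+1) choose Suc r)) * fact r"
    by (simp only: fact_Suc mult_ac)
  also have "\<dots> = (real k + 1) * real (k choose r) * fact r" by (simp only: H)
  finally show ?thesis .
qed

lemma I2: "real (k choose Suc r) * fact (Suc r) = (real k - real r) * real (k choose r) * fact r"
proof (cases "r \<le> k")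
  case True
  have "Suc r * (k choose Suc r) = (k - r) * (k choose r)"
    using binomial_absorption[of r k] binomial_absorb_comp[of k r] by simp
  then have "real (Suc r) * real (k choose Suc r) = real (k - r) * real (k choose r)"
    by (metis of_nat_mult)
  then have H: "real (Suc r) * real (k choose Suc r) = (real k - real r) * real (k choose r)"
    using True by (simp add: of_nat_diff)
  have "real (k choose Suc r) * fact (Suc r) = (real (Suc r) * real (k choose Suc r)) * fact r"
    by (simp only: fact_Suc mult_ac)
  also have "\<dots> = (real k - real r) * real (k choose r) * fact r" by (simp only: H)
  finally show ?thesis .
next
  case False
  then show ?thesis by (simp add: binomial_eq_0)
qed

lemma real_id:
  fixes a :: "nat \<Rightarrow> real"
  assumes "j \<le> d" and "j = d \<Longrightarrow> a (Suc j) = 0"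
  shows "real (k choose (d-j)) * fact (d-j) * a j
    - (if j < d then real (k choose (d-j-1)) * fact (d-j-1) *
          (real (Suc j) * a (Suc j) + real k * real (d-j) * a j) else 0)
    = - (((real j + 1) / (real k + 1) * a (j + 1) + (real d - 1 - real j) * a j)
        * fact (d - j) * real ((k + 1) choose (d - j)))"
proof (cases "j < d")
  case False
  then have "j = d" using assms by simp
  then show ?thesis using assms by simp
next
  case True
  define r where "r = d - j - 1"
  have dj: "d - j = Suc r" "real d - 1 - real j = real r" "d - j - 1 = r" using True by (auto simp: r_def)
  define C where "C = real (k choose r)"
  define F :: real where "F = fact r"
  have h1: "fact (Suc r) * real ((k+1) choose Suc r) = (real k + 1) * C * F"
    using I1[of k r] by (simp add: C_def F_def mult.commute)
  have h2: "real (k choose Suc r) * fact (Suc r) = (real k - real r) * C * F"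
    using I2[of k r] by (simp add: C_def F_def)
  have "real (k choose (d-j)) * fact (d-j) * a j
    - (if j < d then real (k choose (d-j-1)) * fact (d-j-1) *
          (real (Suc j) * a (Suc j) + real k * real (d-j) * a j) else 0)
    = (real k - real r) * C * F * a j - C * F * (real (Suc j) * a (Suc j) + real k * (real r + 1) * a j)"
    using True unfolding dj(1) dj(3) h2 by (simp add: C_def F_def)
  also have "\<dots> = - (((real j + 1) / (real k + 1) * a (j + 1) + real r * a j)
        * ((real k + 1) * C * F))"
    by (simp add: field_simps)
  also have "\<dots> = - (((real j + 1) / (real k + 1) * a (j + 1) + (real d - 1 - real j) * a j)
        * fact (d - j) * real ((k + 1) choose (d - j)))"
    unfolding dj(1) dj(2) by (simp only: h1 mult.assoc)
  finally show ?thesis .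
qed

lemma Gk_T:
  fixes p :: "real poly"
  assumes "degree p \<le> d"
  shows "coeff (((\<lambda>Q. Q - pderiv Q) ^^ k) (G1 k (Pc d (\<lambda>j. of_real (coeff p j))))) 0
     = (map_poly of_real (T_op k d p) :: 'a::real_normed_field poly)"
proof (rule poly_eqI)
  fix j
  show "coeff (coeff (((\<lambda>Q. Q - pderiv Q) ^^ k) (G1 k (Pc d (\<lambda>j. of_real (coeff p j))))) 0) j
      = coeff (map_poly of_real (T_op k d p) :: 'a poly) j"
  proof (cases "j \<le> d")
    case False
    then show ?thesis by (simp add: coeff_Gk coeff_map_poly coeff_T_op)
  next
    case True
    have z: "j = d \<Longrightarrow> coeff p (Suc j) = 0" using assms by (simp add: coeff_eq_0)
    have "coeff (map_poly of_real (T_op k d p) :: 'a poly) j = of_real (coeff (T_op k d p) j)"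
      by (simp add: coeff_map_poly)
    also have "\<dots> = of_real (real (k choose (d-j)) * fact (d-j) * coeff p j
        - (if j < d then real (k choose (d-j-1)) * fact (d-j-1) *
          (real (Suc j) * coeff p (Suc j) + real k * real (d-j) * coeff p j) else 0))"
      using real_id[of j d "coeff p" k, OF True z] True by (simp add: coeff_T_op)
    also have "\<dots> = coeff (coeff (((\<lambda>Q. Q - pderiv Q) ^^ k) (G1 k (Pc d (\<lambda>j. of_real (coeff p j))))) 0) j"
      unfolding coeff_Gk using True by simp
    finally show ?thesis by simp
  qed
qed



lemma ev_sum_set: "ev (sum F A) t s = (\<Sum>x\<in>A. ev (F x) t s)"
  by (simp add: ev_def poly_sum)

lemma ev_monom: "ev (monom q m) t s = poly q t * s ^ m"
  by (simp add: ev_def poly_monom poly_mult poly_power)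

lemma ev_Pc: "ev (Pc d c) t s = (\<Sum>j\<le>d. c j * t ^ j * (-s) ^ (d - j))"
  unfolding Pc_def ev_sum_set ev_monom
  by (intro sum.cong) (auto simp: poly_monom power_mult_distrib[symmetric] mult_ac)

lemma ev_s0: "ev P t 0 = poly (coeff P 0) t"
  by (simp add: ev_def poly_0_coeff_0)

lemma homog_identity:
  fixes fc :: "complex poly"
  assumes fc: "smult (lead_coeff fc) (\<Prod>i<d. [:-rt i, 1:]) = fc" and dg: "degree fc = d"
  shows "(\<Sum>j\<le>d. coeff fc j * t ^ j * (-s) ^ (d - j)) = lead_coeff fc * (\<Prod>i<d. t + s * rt i)"
proof (cases "s = 0")
  case True
  have "(\<Sum>j\<le>d. coeff fc j * t ^ j * (-s) ^ (d - j)) = (\<Sum>j\<le>d. if j = d then coeff fc d * t ^ d else 0)"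
    using True by (intro sum.cong) auto
  also have "\<dots> = coeff fc d * t ^ d" by simp
  finally show ?thesis using True dg by simp
next
  case False
  define x where "x = t / (-s)"
  have "(\<Sum>j\<le>d. coeff fc j * t ^ j * (-s) ^ (d - j)) = (-s)^d * (\<Sum>j\<le>d. coeff fc j * x ^ j)"
    unfolding sum_distrib_left x_def
  proof (intro sum.cong refl)
    fix j assume "j \<in> {..d}"
    then have "(-s)^d = (-s)^(d-j) * (-s)^j" by (simp flip: power_add)
    moreover have "t ^ j = (-s)^j * (t / -s)^j"
      using False by (simp add: power_mult_distrib[symmetric])
    ultimately show "coeff fc j * t ^ j * (- s) ^ (d - j) = (- s) ^ d * (coeff fc j * (t / - s) ^ j)"
      by (simp add: mult_ac)
  qed
  also have "(\<Sum>j\<le>d. coeff fc j * x ^ j) = poly fc x"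
    using dg by (simp add: poly_altdef)
  also have "poly fc x = lead_coeff fc * (\<Prod>i<d. x - rt i)"
    by (subst fc[symmetric]) (simp add: poly_prod)
  also have "(-s)^d * (lead_coeff fc * (\<Prod>i<d. x - rt i)) = lead_coeff fc * (\<Prod>i<d. (-s) * (x - rt i))"
    by (simp only: prod.distrib prod_constant card_lessThan mult_ac)
  also have "(\<Prod>i<d. (-s) * (x - rt i)) = (\<Prod>i<d. t + s * rt i)"
    using False by (intro prod.cong) (auto simp: x_def field_simps)
  finally show ?thesis .
qed

lemma iter_stab:
  fixes Q :: "complex poly poly" and kk :: real
  assumes nz: "\<And>t s. Im t > 0 \<Longrightarrow> kk * Im t + Im s > 0 \<Longrightarrow> ev Q t s \<noteq> 0"
  shows "Im t > 0 \<Longrightarrow> kk * Im t + Im s > 0 \<Longrightarrow> ev (((\<lambda>Q. Q - pderiv Q) ^^ n) Q) t s \<noteq> 0"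
proof (induction n arbitrary: t s)
  case 0 then show ?case using nz by simp
next
  case (Suc n)
  define P where "P = ((\<lambda>Q. Q - pderiv Q) ^^ n) Q"
  have "ev P t s - (0 * ev (map_poly pderiv P) t s + 1 * ev (pderiv P) t s) \<noteq> 0"
  proof (rule stab[where Good = "\<lambda>t s. Im t > 0 \<and> kk * Im t + Im s > 0"])
    show "\<And>t s l. Im t > 0 \<and> kk * Im t + Im s > 0 \<Longrightarrow> 0 \<le> Im l \<Longrightarrow>
        Im (t + l * 0) > 0 \<and> kk * Im (t + l * 0) + Im (s + l * 1) > 0" by auto
    show "\<And>t s. Im t > 0 \<and> kk * Im t + Im s > 0 \<Longrightarrow> ev P t s \<noteq> 0"
      using Suc.IH unfolding P_def by blast
  qed (use Suc.prems in auto)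
  then show ?case by (simp add: P_def)
qed

lemma G1_stab:
  fixes P :: "complex poly poly"
  assumes nz: "\<And>t s. Im t > 0 \<Longrightarrow> real k * Im t + Im s > 0 \<Longrightarrow> ev P t s \<noteq> 0"
    and "Im t > 0" "real k * Im t + Im s > 0"
  shows "ev (G1 k P) t s \<noteq> 0"
proof -
  have "ev P t s - (1 * ev (map_poly pderiv P) t s + (- of_nat k) * ev (pderiv P) t s) \<noteq> 0"
  proof (rule stab[where Good = "\<lambda>t s. Im t > 0 \<and> real k * Im t + Im s > 0"])
    show "\<And>t s l. Im t > 0 \<and> real k * Im t + Im s > 0 \<Longrightarrow> 0 \<le> Im l \<Longrightarrow>
        Im (t + l * 1) > 0 \<and> real k * Im (t + l * 1) + Im (s + l * (- of_nat k)) > 0"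
      by (auto simp: algebra_simps)
  qed (use assms in auto)
  then show ?thesis by (simp add: G1_def algebra_simps)
qed

lemma factor_pos:
  fixes t s :: complex and \<rho> :: real
  assumes k: "k > 0" and r: "0 \<le> \<rho>" "\<rho> \<le> 1 / real k"
    and g: "Im t > 0" "real k * Im t + Im s > 0"
  shows "Im (t + s * of_real \<rho>) > 0"
proof (cases "Im s \<ge> 0")
  case True
  then show ?thesis using g r by (simp add: add_pos_nonneg)
next
  case False
  have "\<rho> * Im s \<ge> (1 / real k) * Im s"
    using False r by (intro mult_right_mono_neg) auto
  moreover have "Im t + (1 / real k) * Im s > 0"
  proof -
    have "real k * (Im t + (1 / real k) * Im s) = real k * Im t + Im s" using k by (simp add: field_simps)
    then show ?thesis using g k by (metis zero_less_mult_pos of_nat_0_less_iff)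
  qed
  ultimately show ?thesis by (simp add: mult.commute)
qed

lemma part2:
  fixes f :: "real poly"
  assumes k: "k > 0" and dg: "degree f = d" and rooted: "rooted_in {0..1 / real k} f"
  shows "real_rooted (T_op k d f)"
proof -
  define fc where "fc = map_poly complex_of_real f"
  have fnz: "f \<noteq> 0"
  proof
    assume "f = 0"
    then have "poly (map_poly complex_of_real f) \<i> = 0" by simp
    then have "\<i> \<in> complex_of_real ` {0..1 / real k}" using rooted unfolding rooted_in_def by blast
    then show False by (auto simp: complex_eq_iff)
  qed
  have dfc: "degree fc = d" unfolding fc_def dg[symmetric] by (rule degree_map_poly) simp
  have cfc: "coeff fc j = of_real (coeff f j)" for j unfolding fc_def by (simp add: coeff_map_poly)
  have fcnz: "fc \<noteq> 0"
  proof
    assume "fc = 0"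
    then have "coeff f j = 0" for j using cfc[of j] by simp
    then have "f = 0" by (intro poly_eqI) simp
    with fnz show False by simp
  qed
  obtain rt where rt: "smult (lead_coeff fc) (\<Prod>i<degree fc. [:-rt i, 1:]) = fc"
    using complex_poly_decompose' by blast
  then have rt': "smult (lead_coeff fc) (\<Prod>i<d. [:-rt i, 1:]) = fc" using dfc by simp
  have rtreal: "\<exists>\<rho>. rt i = of_real \<rho> \<and> 0 \<le> \<rho> \<and> \<rho> \<le> 1 / real k" if "i < d" for i
  proof -
    have "poly fc (rt i) = 0"
      by (subst rt'[symmetric]) (use that in \<open>auto simp: poly_prod intro!: prod_zero\<close>)
    then have "rt i \<in> complex_of_real ` {0..1 / real k}"
      using rooted unfolding rooted_in_def fc_def by blast
    then show ?thesis by auto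
  qed
  define P where "P = Pc d (\<lambda>j. complex_of_real (coeff f j))"
  have evP: "ev P t s = lead_coeff fc * (\<Prod>i<d. t + s * rt i)" for t s
    unfolding P_def ev_Pc cfc[symmetric] by (rule homog_identity[OF rt' dfc])
  have nzP: "ev P t s \<noteq> 0" if "Im t > 0" "real k * Im t + Im s > 0" for t s
  proof -
    have "t + s * rt i \<noteq> 0" if "i < d" for i
    proof -
      obtain \<rho> where "rt i = of_real \<rho>" "0 \<le> \<rho>" "\<rho> \<le> 1 / real k" using rtreal[OF \<open>i < d\<close>] by blast
      then have "Im (t + s * rt i) > 0" using factor_pos[OF k] \<open>Im t > 0\<close> \<open>real k * Im t + Im s > 0\<close> by simp
      then show ?thesis by (metis zero_complex.sel(2) less_irrefl)
    qed
    then show ?thesis unfolding evP using fcnz by simp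
  qed
  define Gk where "Gk = ((\<lambda>Q. Q - pderiv Q) ^^ k) (G1 k P)"
  have nzG: "ev Gk t s \<noteq> 0" if "Im t > 0" "real k * Im t + Im s > 0" for t s
    unfolding Gk_def
    by (rule iter_stab[OF _ that]) (rule G1_stab[OF nzP])
  have GT: "coeff Gk 0 = map_poly complex_of_real (T_op k d f)"
    unfolding Gk_def P_def by (rule Gk_T) (simp add: dg)
  have upper: "poly (map_poly complex_of_real (T_op k d f)) z \<noteq> 0" if "Im z > 0" for z
    using nzG[of z 0] that k unfolding ev_s0 GT by simp
  have realc: "\<And>n. coeff (map_poly complex_of_real (T_op k d f)) n \<in> \<real>"
    by (simp add: coeff_map_poly)
  show ?thesis unfolding real_rooted_def rooted_in_def
  proof (intro allI impI)
    fix z assume z: "poly (map_poly complex_of_real (T_op k d f)) z = 0"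
    have "Im z = 0"
    proof (rule ccontr)
      assume "Im z \<noteq> 0"
      then consider "Im z > 0" | "Im (cnj z) > 0" by force
      then show False
      proof cases
        case 1 then show False using upper z by blast
      next
        case 2
        have "poly (map_poly complex_of_real (T_op k d f)) (cnj z) = 0"
          using z real_poly_cnj_root_iff[OF realc] by blast
        then show False using upper 2 by blast
      qed
    qed
    then have "z = of_real (Re z)" by (simp add: complex_eq_iff)
    then show "z \<in> complex_of_real ` UNIV" by blast
  qed
qed



lemma homog_expand:
  fixes h :: "real^'n \<Rightarrow> real"
  assumes "homog_poly_fun d h"
  obtains S c where "finite S" "\<And>\<alpha>. \<alpha> \<in> S \<Longrightarrow> (\<Sum>i\<in>UNIV. \<alpha> i) = d"
    "h = (\<lambda>x. \<Sum>\<alpha>\<in>S. c \<alpha> * (\<Prod>i\<in>UNIV. (x $ i) ^ (\<alpha> i)))"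
  using assms unfolding homog_poly_fun_def by blast

lemma homog_scale:
  fixes h :: "real^'n \<Rightarrow> real"
  assumes "homog_poly_fun d h"
  shows "h (a *\<^sub>R x) = a ^ d * h x"
proof -
  obtain S c where S: "finite S" "\<And>\<alpha>. \<alpha> \<in> S \<Longrightarrow> (\<Sum>i\<in>UNIV. \<alpha> i) = d"
    and h: "h = (\<lambda>x. \<Sum>\<alpha>\<in>S. c \<alpha> * (\<Prod>i\<in>UNIV. (x $ i) ^ (\<alpha> i)))"
    using homog_expand[OF assms] by blast
  have "(\<Prod>i\<in>UNIV. ((a *\<^sub>R x) $ i) ^ (\<alpha> i)) = a ^ d * (\<Prod>i\<in>UNIV. (x $ i) ^ (\<alpha> i))"
    if "\<alpha> \<in> S" for \<alpha>
  proof -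
    have "(\<Prod>i\<in>UNIV. ((a *\<^sub>R x) $ i) ^ (\<alpha> i)) = (\<Prod>i\<in>UNIV. a ^ \<alpha> i * (x $ i) ^ (\<alpha> i))"
      by (simp add: power_mult_distrib)
    also have "\<dots> = a ^ (\<Sum>i\<in>UNIV. \<alpha> i) * (\<Prod>i\<in>UNIV. (x $ i) ^ (\<alpha> i))"
      by (simp add: prod.distrib power_sum)
    finally show ?thesis using S(2)[OF that] by simp
  qed
  then show ?thesis unfolding h by (simp add: sum_distrib_left mult_ac)
qed

lemma homog_cont:
  fixes h :: "real^'n \<Rightarrow> real"
  assumes "homog_poly_fun d h"
  shows "continuous_on UNIV h"
proof -
  obtain S c where h: "h = (\<lambda>x. \<Sum>\<alpha>\<in>S. c \<alpha> * (\<Prod>i\<in>UNIV. (x $ i) ^ (\<alpha> i)))"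
    using homog_expand[OF assms] by blast
  show ?thesis unfolding h by (intro continuous_intros)
qed

lemma homog_line_degree:
  fixes h :: "real^'n \<Rightarrow> real"
  assumes "homog_poly_fun d h" and p: "\<And>t. poly p t = h (t *\<^sub>R e - v)"
  shows "degree p \<le> d"
proof -
  obtain S c where S: "finite S" "\<And>\<alpha>. \<alpha> \<in> S \<Longrightarrow> (\<Sum>i\<in>UNIV. \<alpha> i) = d"
    and h: "h = (\<lambda>x. \<Sum>\<alpha>\<in>S. c \<alpha> * (\<Prod>i\<in>UNIV. (x $ i) ^ (\<alpha> i)))"
    using homog_expand[OF assms(1)] by blast
  define Q where "Q = (\<Sum>\<alpha>\<in>S. smult (c \<alpha>) (\<Prod>i\<in>UNIV. [:- (v $ i), e $ i:] ^ (\<alpha> i)))"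
  have "poly Q t = h (t *\<^sub>R e - v)" for t
    unfolding Q_def h by (simp add: poly_sum poly_prod poly_power algebra_simps)
  then have "poly p = poly Q" using p by auto
  then have pQ: "p = Q" by (simp add: poly_eq_poly_eq_iff)
  have "degree Q \<le> d" unfolding Q_def
  proof (rule degree_sum_le[OF S(1)])
    fix \<alpha> assume a: "\<alpha> \<in> S"
    have "degree (smult (c \<alpha>) (\<Prod>i\<in>UNIV. [:- (v $ i), e $ i:] ^ (\<alpha> i)))
       \<le> degree (\<Prod>i\<in>UNIV. [:- (v $ i), e $ i:] ^ (\<alpha> i))" by (rule degree_smult_le)
    also have "\<dots> \<le> (\<Sum>i\<in>UNIV. degree ([:- (v $ i), e $ i:] ^ (\<alpha> i)))"
      using degree_prod_sum_le[of UNIV "\<lambda>i. [:- (v $ i), e $ i:] ^ (\<alpha> i)"] by simp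
    also have "\<dots> \<le> (\<Sum>i\<in>UNIV. \<alpha> i)"
    proof (rule sum_mono)
      fix i
      have "degree ([:- (v $ i), e $ i:] ^ (\<alpha> i)) \<le> degree [:- (v $ i), e $ i:] * \<alpha> i"
        by (rule degree_power_le)
      also have "\<dots> \<le> 1 * \<alpha> i" by (intro mult_right_mono) auto
      finally show "degree ([:- (v $ i), e $ i:] ^ (\<alpha> i)) \<le> \<alpha> i" by simp
    qed
    also have "\<dots> = d" using S(2)[OF a] .
    finally show "degree (smult (c \<alpha>) (\<Prod>i\<in>UNIV. [:- (v $ i), e $ i:] ^ (\<alpha> i))) \<le> d" .
  qed
  then show ?thesis using pQ by simp
qed

lemma cont_eq0:
  fixes f g :: "real \<Rightarrow> real"
  assumes "isCont f 0" "isCont g 0" "\<And>x. x \<noteq> 0 \<Longrightarrow> f x = g x"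
  shows "f 0 = g 0"
proof -
  have f: "(f \<longlongrightarrow> f 0) (at 0)" using assms(1) by (simp add: isCont_def)
  have g: "(g \<longlongrightarrow> g 0) (at 0)" using assms(2) by (simp add: isCont_def)
  have ev: "eventually (\<lambda>x. f x = g x) (at 0)"
    using assms(3) by (auto simp: eventually_at_filter)
  have "(g \<longlongrightarrow> f 0) (at 0)" by (rule Lim_transform_eventually[OF f ev])
  then show ?thesis using g by (rule tendsto_unique[OF at_neq_bot])
qed

lemma sum_hom_scale:
  fixes a :: "nat \<Rightarrow> 'a::field"
  assumes "s \<noteq> 0"
  shows "(\<Sum>j\<le>d. a j * t ^ j * (-s) ^ (d - j)) = (-s)^d * (\<Sum>j\<le>d. a j * (t / -s) ^ j)"
  unfolding sum_distrib_left
proof (intro sum.cong refl)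
  fix j assume "j \<in> {..d}"
  then have "(-s)^d = (-s)^(d-j) * (-s)^j" by (simp flip: power_add)
  moreover have "t ^ j = (-s)^j * (t / -s)^j"
    using assms by (simp add: power_mult_distrib[symmetric])
  ultimately show "a j * t ^ j * (- s) ^ (d - j) = (- s) ^ d * (a j * (t / - s) ^ j)"
    by (simp add: mult_ac)
qed

lemma plane_id:
  fixes h :: "real^'n \<Rightarrow> real"
  assumes hom: "homog_poly_fun d h" and p: "\<And>t. poly p t = h (t *\<^sub>R e - v)"
  shows "h (t *\<^sub>R e + s *\<^sub>R v) = ev (Pc d (\<lambda>j. of_real (coeff p j))) t s"
proof -
  have dg: "degree p \<le> d" using homog_line_degree[OF hom p] .
  define g where "g s = (\<Sum>j\<le>d. coeff p j * t ^ j * (-s) ^ (d - j))" for s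
  have evP: "ev (Pc d (\<lambda>j. of_real (coeff p j))) t s = g s" for s
    unfolding ev_Pc g_def by simp
  have ne: "h (t *\<^sub>R e + s *\<^sub>R v) = g s" if "s \<noteq> 0" for s
  proof -
    have eqx: "t *\<^sub>R e + s *\<^sub>R v = (-s) *\<^sub>R ((t / -s) *\<^sub>R e - v)"
    proof -
      have m: "(-s) * (t / -s) = t" using that by simp
      have "(-s) *\<^sub>R ((t / -s) *\<^sub>R e - v) = ((-s) * (t / -s)) *\<^sub>R e - (-s) *\<^sub>R v"
        by (simp only: scaleR_right_diff_distrib scaleR_scaleR)
      then show ?thesis unfolding m by simp
    qed
    have "h (t *\<^sub>R e + s *\<^sub>R v) = h ((-s) *\<^sub>R ((t / -s) *\<^sub>R e - v))"
      by (subst eqx) (rule refl)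
    also have "\<dots> = (-s)^d * h ((t / -s) *\<^sub>R e - v)" by (rule homog_scale[OF hom])
    also have "\<dots> = (-s)^d * poly p (t / -s)" by (simp only: p)
    also have "\<dots> = (-s)^d * (\<Sum>j\<le>d. coeff p j * (t / -s) ^ j)"
      by (simp add: poly_sum_N[OF dg])
    also have "\<dots> = g s" unfolding g_def by (rule sum_hom_scale[symmetric, OF that])
    finally show ?thesis .
  qed
  have "h (t *\<^sub>R e + s *\<^sub>R v) = g s"
  proof (cases "s = 0")
    case False then show ?thesis by (rule ne)
  next
    case True
    have c1: "isCont (\<lambda>s. h (t *\<^sub>R e + s *\<^sub>R v)) 0"
    proof -
      have hc: "isCont h x" for x using homog_cont[OF hom] by (simp add: continuous_on_eq_continuous_at)
      have lc: "isCont (\<lambda>s. t *\<^sub>R e + s *\<^sub>R v) 0" by (intro continuous_intros)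
      show ?thesis by (rule isCont_o2[OF lc hc])
    qed
    have c2: "isCont g 0"
    proof -
      have "g = (\<lambda>s. \<Sum>j\<le>d. coeff p j * t ^ j * (-s) ^ (d - j))" by (rule ext) (simp add: g_def)
      then show ?thesis by (simp add: continuous_intros)
    qed
    have "h (t *\<^sub>R e + 0 *\<^sub>R v) = g 0" by (rule cont_eq0[OF c1 c2 ne])
    then show ?thesis using True by simp
  qed
  then show ?thesis using evP by simp
qed

definition rep :: "(real^'n \<Rightarrow> real) \<Rightarrow> real^'n \<Rightarrow> real^'n \<Rightarrow> real poly poly \<Rightarrow> bool" where
  "rep F e v Q \<longleftrightarrow> (\<forall>t s. F (t *\<^sub>R e + s *\<^sub>R v) = ev Q t s)"

lemma deriv_ev_s: "deriv (\<lambda>r. ev Q t (s + r)) 0 = ev (pderiv Q) t s"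
proof -
  have "((\<lambda>x. ev Q t x) has_field_derivative ev (pderiv Q) t s) (at (0 + s))"
    using ev_DERIV_s[of Q t s] by simp
  then have "((\<lambda>x. ev Q t (x + s)) has_field_derivative ev (pderiv Q) t s) (at 0)"
    by (simp only: DERIV_shift)
  then have "((\<lambda>x. ev Q t (s + x)) has_field_derivative ev (pderiv Q) t s) (at 0)"
    by (simp only: add.commute)
  then show ?thesis by (rule DERIV_imp_deriv)
qed

lemma deriv_ev_t: "deriv (\<lambda>r. ev Q (t + r) s) 0 = ev (map_poly pderiv Q) t s"
proof -
  have "((\<lambda>x. ev Q x s) has_field_derivative ev (map_poly pderiv Q) t s) (at (0 + t))"
    using ev_DERIV_t[of Q s t] by simp
  then have "((\<lambda>x. ev Q (x + t) s) has_field_derivative ev (map_poly pderiv Q) t s) (at 0)"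
    by (simp only: DERIV_shift)
  then have "((\<lambda>x. ev Q (t + x) s) has_field_derivative ev (map_poly pderiv Q) t s) (at 0)"
    by (simp only: add.commute)
  then show ?thesis by (rule DERIV_imp_deriv)
qed

lemma rep_Dv:
  assumes "rep F e v Q"
  shows "Dv v F (t *\<^sub>R e + s *\<^sub>R v) = ev (pderiv Q) t s"
proof -
  have "(\<lambda>r. F (t *\<^sub>R e + s *\<^sub>R v + r *\<^sub>R v)) = (\<lambda>r. ev Q t (s + r))"
  proof
    fix r
    have eq: "t *\<^sub>R e + s *\<^sub>R v + r *\<^sub>R v = t *\<^sub>R e + (s + r) *\<^sub>R v" by (simp add: scaleR_add_left)
    show "F (t *\<^sub>R e + s *\<^sub>R v + r *\<^sub>R v) = ev Q t (s + r)" unfolding eq using assms unfolding rep_def by blast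
  qed
  then show ?thesis unfolding Dv_def by (simp add: deriv_ev_s)
qed

lemma rep_De:
  assumes "rep F e v Q"
  shows "Dv e F (t *\<^sub>R e + s *\<^sub>R v) = ev (map_poly pderiv Q) t s"
proof -
  have "(\<lambda>r. F (t *\<^sub>R e + s *\<^sub>R v + r *\<^sub>R e)) = (\<lambda>r. ev Q (t + r) s)"
  proof
    fix r
    have eq: "t *\<^sub>R e + s *\<^sub>R v + r *\<^sub>R e = (t + r) *\<^sub>R e + s *\<^sub>R v" by (simp add: scaleR_add_left)
    show "F (t *\<^sub>R e + s *\<^sub>R v + r *\<^sub>R e) = ev Q (t + r) s" unfolding eq using assms unfolding rep_def by blast
  qed
  then show ?thesis unfolding Dv_def by (simp add: deriv_ev_t)
qed

lemma rep_iter: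
  assumes "rep F e v Q"
  shows "rep (((\<lambda>f x. f x - Dv v f x) ^^ n) F) e v (((\<lambda>Q. Q - pderiv Q) ^^ n) Q)"
proof (induction n)
  case 0 then show ?case using assms by simp
next
  case (Suc n)
  then show ?case unfolding rep_def by (simp add: rep_Dv[OF Suc])
qed

lemma part1:
  fixes h :: "real^'n \<Rightarrow> real"
  assumes hom: "homog_poly_fun d h" and p: "\<And>t. poly p t = h (t *\<^sub>R e - v)"
  shows "g_v k h e v t = poly (T_op k d p) t"
proof -
  define P :: "real poly poly" where "P = Pc d (\<lambda>j. of_real (coeff p j))"
  have rP: "rep h e v P" unfolding rep_def P_def using plane_id[OF hom p] by blast
  define F1 where "F1 = (\<lambda>x. h x - Dv e h x + real k * Dv v h x)"
  have r1: "rep F1 e v (G1 k P)"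
    unfolding rep_def F1_def G1_def by (simp add: rep_De[OF rP] rep_Dv[OF rP] rP[unfolded rep_def])
  have rk: "rep (((\<lambda>f x. f x - Dv v f x) ^^ k) F1) e v (((\<lambda>Q. Q - pderiv Q) ^^ k) (G1 k P))"
    by (rule rep_iter[OF r1])
  have "g_v k h e v t = (((\<lambda>f x. f x - Dv v f x) ^^ k) F1) (t *\<^sub>R e + 0 *\<^sub>R v)"
    unfolding g_v_def F1_def by simp
  also have "\<dots> = ev (((\<lambda>Q. Q - pderiv Q) ^^ k) (G1 k P)) t 0"
    using rk unfolding rep_def by blast
  also have "\<dots> = poly (coeff (((\<lambda>Q. Q - pderiv Q) ^^ k) (G1 k P)) 0) t" by (rule ev_s0)
  also have "coeff (((\<lambda>Q. Q - pderiv Q) ^^ k) (G1 k P)) 0 = map_poly of_real (T_op k d p)"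
    unfolding P_def by (rule Gk_T[OF homog_line_degree[OF hom p]])
  finally show ?thesis by simp
qed

theorem lemma6p8:
  fixes h :: "real^'n \<Rightarrow> real" and e v :: "real^'n" and d k :: nat
  assumes "hyperbolic d h e" and "k > 0"
  shows "(\<forall>p. (\<forall>t. poly p t = h (t *\<^sub>R e - v)) \<longrightarrow>
            (\<forall>t. g_v k h e v t = poly (T_op k d p) t))
       \<and> (\<forall>f. degree f = d \<and> rooted_in {0..1 / real k} f \<longrightarrow> real_rooted (T_op k d f))"
proof (intro conjI allI impI)
  have hom: "homog_poly_fun d h" using assms(1) unfolding hyperbolic_def by blast
  fix p t assume "\<forall>t. poly p t = h (t *\<^sub>R e - v)"
  then show "g_v k h e v t = poly (T_op k d p) t" using part1[OF hom] by blast
next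
  fix f :: "real poly" assume "degree f = d \<and> rooted_in {0..1 / real k} f"
  then show "real_rooted (T_op k d f)" using part2[OF assms(2)] by blast
qed

end
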